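(* Let $E=(\mathcal{X},\mathcal{Y},\mathcal{Z},f,g)$ be an information-lossless finite-state encoder with $s$ states, and let $K$ be its Kraft matrix. Then the spectral radius of $K$ satisfies $\rho(K)\le 1$. Consequently, for every positive integer $\ell$, the matrix $K^\ell$, whose $(z,z')$ entry equals $\sum_{\{x^\ell\in\mathcal{X}^\ell:\ g(z,x^\ell)=z'\}}2^{-L[f(z,x^\ell)]}$, also satisfies $\rho(K^\ell)\le 1$.
   Context: A finite-state (FS) encoder is a quintuple $E=(\mathcal{X},\mathcal{Y},\mathcal{Z},f,g)$, where $\mathcal{X}$ is a finite source alphabet of size $\alpha$, $\mathcal{Y}$ is a finite set of binary strings (possibly containing the empty string, of length $0$), $\mathcal{Z}$ is a finite set of $s$ states, $f:\mathcal{Z}\times\mathcal{X}\to\mathcal{Y}$ is the output function and $g:\mathcal{Z}\times\mathcal{X}\to\mathcal{Z}$ is the next-state function. For $z\in\mathcal{Z}$ and $x^n=(x_1,\dots,x_n)\in\mathcal{X}^n$, set $z_1=z$, $z_{i+1}=g(z_i,x_i)$; write $g(z,x^n)=z_{n+1}$ and let $f(z,x^n)$ denote the binary string obtained by concatenating $f(z_1,x_1),\dots,f(z_n,x_n)$; its length is $L[f(z,x^n)]=\sum_{i=1}^n L[f(z_i,x_i)]$, where $L(\cdot)$ denotes the length of a binary string. The encoder is information lossless (IL) if for every $z\in\mathcal{Z}$ and every $n\ge1$, the map $x^n\mapsto (f(z,x^n),g(z,x^n))$ is injective on $\mathcal{X}^n$ (i.e., the initial state, the output bit string and the final state determine the input).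 The Kraft matrix of $E$ is the $s\times s$ nonnegative matrix $K$ with entries $K_{zz'}=\sum_{\{x\in\mathcal{X}:\ g(z,x)=z'\}}2^{-L[f(z,x)]}$ (an empty sum is $0$). $\rho(\cdot)$ denotes spectral radius. *)

theory Defs
  imports "Jordan_Normal_Form.Spectral_Radius"
begin

definition fs_encoder :: "nat \<Rightarrow> (nat \<Rightarrow> 'x::finite \<Rightarrow> bool list) \<Rightarrow> (nat \<Rightarrow> 'x \<Rightarrow> nat) \<Rightarrow> bool" where
  "fs_encoder s f g \<longleftrightarrow> 0 < s \<and> (\<forall>z<s. \<forall>x. g z x < s)"

fun run_state :: "(nat \<Rightarrow> 'x \<Rightarrow> nat) \<Rightarrow> nat \<Rightarrow> 'x list \<Rightarrow> nat" where
  "run_state g z [] = z"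
| "run_state g z (x # xs) = run_state g (g z x) xs"

fun run_out :: "(nat \<Rightarrow> 'x \<Rightarrow> bool list) \<Rightarrow> (nat \<Rightarrow> 'x \<Rightarrow> nat) \<Rightarrow> nat \<Rightarrow> 'x list \<Rightarrow> bool list" where
  "run_out f g z [] = []"
| "run_out f g z (x # xs) = f z x @ run_out f g (g z x) xs"

definition info_lossless :: "nat \<Rightarrow> (nat \<Rightarrow> 'x::finite \<Rightarrow> bool list) \<Rightarrow> (nat \<Rightarrow> 'x \<Rightarrow> nat) \<Rightarrow> bool" where
  "info_lossless s f g \<longleftrightarrow>
     (\<forall>z<s. \<forall>n\<ge>1. inj_on (\<lambda>xs. (run_out f g z xs, run_state g z xs)) {xs. length xs = n})"

definition kraft_mat :: "nat \<Rightarrow> (nat \<Rightarrow> 'x::finite \<Rightarrow> bool list) \<Rightarrow> (nat \<Rightarrow> 'x \<Rightarrow> nat) \<Rightarrow> complex mat" where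
  "kraft_mat s f g = mat s s (\<lambda>(z, z'). complex_of_real
      (\<Sum>x\<in>{x. g z x = z'}. 2 powr (- real (length (f z x)))))"

end

theory Submission
  imports Defs
begin

lemma card_bool_lists: "card {w::bool list. length w = m} = 2 ^ m"
  using card_lists_length_eq[of "UNIV :: bool set" m] by simp

lemma finite_bool_lists: "finite {w::bool list. length w = m}"
  using finite_lists_length_eq[of "UNIV :: bool set" m] by simp

lemma finite_bool_lists_le: "finite {w::bool list. length w \<le> m}"
  using finite_lists_length_le[of "UNIV :: bool set" m] by simp

lemma kraft_sum_le: "(\<Sum>w\<in>{w::bool list. length w \<le> N}. 2 powr (- real (length w))) = real N + 1"
proof (induction N)
  case 0
  have "{w::bool list. length w \<le> 0} = {[]}" by auto
  then show ?case by simp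
next
  case (Suc N)
  have eq: "{w::bool list. length w \<le> Suc N} = {w. length w \<le> N} \<union> {w. length w = Suc N}" by auto
  have "(\<Sum>w\<in>{w::bool list. length w = Suc N}. 2 powr (- real (length w)))
      = (\<Sum>w\<in>{w::bool list. length w = Suc N}. 2 powr (- real (Suc N)))" by simp
  also have "\<dots> = 2 ^ Suc N * 2 powr (- real (Suc N))" using card_bool_lists[of "Suc N"] by simp
  also have "\<dots> = 2 powr real (Suc N) * 2 powr (- real (Suc N))"
    by (subst powr_realpow) auto
  also have "\<dots> = 1" by (simp add: powr_add[symmetric] del: of_nat_Suc)
  finally have 1: "(\<Sum>w\<in>{w::bool list. length w = Suc N}. 2 powr (- real (length w))) = 1" .
  have "(\<Sum>w\<in>{w::bool list. length w \<le> N} \<union> {w. length w = Suc N}. 2 powr (- real (length w)))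
    = (\<Sum>w\<in>{w::bool list. length w \<le> N}. 2 powr (- real (length w))) + (\<Sum>w\<in>{w::bool list. length w = Suc N}. 2 powr (- real (length w)))"
    by (rule sum.union_disjoint) (auto simp: finite_bool_lists finite_bool_lists_le)
  then show ?case unfolding eq using Suc 1 by simp
qed

lemma sr_le_1:
  fixes A :: "complex mat"
  assumes A: "A \<in> carrier_mat n n" and n: "n > 0"
    and bnd: "\<And>k i j. i < n \<Longrightarrow> j < n \<Longrightarrow> cmod ((A ^\<^sub>m k) $$ (i, j)) \<le> C * (real k + 1)"
  shows "spectral_radius A \<le> 1"
proof (rule ccontr)
  assume "\<not> spectral_radius A \<le> 1"
  then have gt: "spectral_radius A > 1" by simp
  from spectral_radius_mem_max(1)[OF A n] obtain ev where ev: "ev \<in> spectrum A"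
    and nev: "norm ev = spectral_radius A" by auto
  from ev[unfolded spectrum_def eigenvalue_def[abs_def]]
  obtain v where evec: "eigenvector A v ev" by auto
  have vc: "v \<in> carrier_vec n" and vnz: "v \<noteq> 0\<^sub>v n"
    using evec A unfolding eigenvector_def by auto
  obtain i where i: "i < n" "v $ i \<noteq> 0"
    using vnz vc by (metis eq_vecI carrier_vecD index_zero_vec(1,2))
  have C0: "C \<ge> 0" using bnd[OF n n, of 0] by simp (meson norm_ge_zero order_trans)
  define V where "V = (\<Sum>j<n. cmod (v $ j))"
  have V0: "V \<ge> 0" unfolding V_def by (simp add: sum_nonneg)
  define D where "D = C * V / cmod (v $ i)"
  have D0: "D \<ge> 0" unfolding D_def using C0 V0 by simp
  have key: "norm ev ^ k \<le> D * (real k + 1)" for k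
  proof -
    have "(A ^\<^sub>m k *\<^sub>v v) $ i = ev ^ k * v $ i"
      using eigenvector_pow[OF A evec, of k] i vc by simp
    moreover have "(A ^\<^sub>m k *\<^sub>v v) $ i = (\<Sum>j<n. (A ^\<^sub>m k) $$ (i, j) * v $ j)"
      using A vc i by (simp add: scalar_prod_def lessThan_atLeast0)
    ultimately have "norm ev ^ k * cmod (v $ i) = cmod (\<Sum>j<n. (A ^\<^sub>m k) $$ (i, j) * v $ j)"
      by (metis norm_mult norm_power)
    also have "\<dots> \<le> (\<Sum>j<n. cmod ((A ^\<^sub>m k) $$ (i, j)) * cmod (v $ j))"
      by (metis (no_types, lifting) norm_mult norm_sum sum.cong)
    also have "\<dots> \<le> (\<Sum>j<n. C * (real k + 1) * cmod (v $ j))"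
      by (intro sum_mono mult_right_mono bnd i) auto
    also have "\<dots> = C * V * (real k + 1)" unfolding V_def by (simp add: sum_distrib_left sum_distrib_right mult_ac)
    finally show ?thesis unfolding D_def using i by (simp add: field_simps)
  qed
  have gt1: "1 < norm (norm ev)" using gt nev by simp
  have "(\<lambda>k. real k / norm ev ^ k) \<longlonglongrightarrow> 0"
    using lim_n_over_pown[OF gt1] by simp
  moreover have "(\<lambda>k. 1 / norm ev ^ k) \<longlonglongrightarrow> 0"
    using gt nev by (intro LIMSEQ_divide_realpow_zero) auto
  ultimately have "(\<lambda>k. real k / norm ev ^ k + 1 / norm ev ^ k) \<longlonglongrightarrow> 0"
    using tendsto_add by fastforce
  then have "\<forall>\<^sub>F k in sequentially. (real k / norm ev ^ k + 1 / norm ev ^ k) < 1 / (D + 1)"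
    using D0 by (intro order_tendstoD) auto
  then obtain k where k: "real k / norm ev ^ k + 1 / norm ev ^ k < 1 / (D + 1)"
    by (meson eventually_sequentially le_refl)
  have pos: "norm ev ^ k > 0" using gt nev by simp
  from k have "(real k + 1) / norm ev ^ k < 1 / (D + 1)" by (simp add: add_divide_distrib)
  then have "(real k + 1) * (D + 1) < norm ev ^ k" using pos D0
    by (simp add: field_simps)
  moreover have "norm ev ^ k \<le> D * (real k + 1)" by (rule key)
  moreover have "D * (real k + 1) \<le> (real k + 1) * (D + 1)" by (simp add: algebra_simps)
  ultimately show False by linarith
qed

lemma pow_mat_add: assumes A: "(A :: 'a :: semiring_1 mat) \<in> carrier_mat n n"
  shows "A ^\<^sub>m (a + b) = A ^\<^sub>m a * A ^\<^sub>m b"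
proof (induction b)
  case 0
  then show ?case using A by (simp add: right_mult_one_mat)
next
  case (Suc b)
  have "A ^\<^sub>m (a + Suc b) = (A ^\<^sub>m a * A ^\<^sub>m b) * A" using Suc by simp
  also have "\<dots> = A ^\<^sub>m a * (A ^\<^sub>m b * A)"
    using A by (intro assoc_mult_mat[of _ n n _ n _ n]) auto
  finally show ?case by simp
qed

lemma pow_mat_pow: assumes A: "(A :: 'a :: semiring_1 mat) \<in> carrier_mat n n"
  shows "(A ^\<^sub>m l) ^\<^sub>m m = A ^\<^sub>m (l * m)"
proof (induction m)
  case 0
  then show ?case using A by simp
next
  case (Suc m)
  then show ?case using pow_mat_add[OF A, of "l * m" l] by (simp add: add.commute)
qed

lemma pow_mat_Suc': assumes A: "(A :: 'a :: semiring_1 mat) \<in> carrier_mat n n"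
  shows "A ^\<^sub>m (Suc l) = A * A ^\<^sub>m l"
  using pow_mat_add[OF A, of 1 l] A by (simp add: left_mult_one_mat)

lemma finite_len: "finite {xs::'x::finite list. length xs = n}"
  using finite_lists_length_eq[of "UNIV :: 'x set" n] by simp

lemma run_state_lt: assumes "fs_encoder s f g" "z < s"
  shows "run_state g z xs < s"
  using assms(2) by (induction xs arbitrary: z) (use assms(1) in \<open>auto simp: fs_encoder_def\<close>)

lemma run_out_len: assumes "fs_encoder s f g" "z < s"
  and M: "\<And>z x. z < s \<Longrightarrow> length (f z x) \<le> M"
  shows "length (run_out f g z xs) \<le> length xs * M"
  using assms(2)
proof (induction xs arbitrary: z)
  case Nil
  then show ?case by simp
next
  case (Cons x xs)
  have "g z x < s" using assms(1) Cons.prems by (auto simp: fs_encoder_def)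
  then have "length (run_out f g (g z x) xs) \<le> length xs * M" by (rule Cons.IH)
  then show ?case using M[OF Cons.prems, of x] by simp
qed

definition S where "S f g l z z' = (\<Sum>xs\<in>{xs. length xs = l \<and> run_state g z xs = z'}.
              2 powr (- real (length (run_out f g z xs))))"

lemma S_Suc:
  fixes f :: "nat \<Rightarrow> 'x::finite \<Rightarrow> bool list"
  shows "S f g (Suc l) z z' = (\<Sum>x\<in>UNIV. 2 powr (- real (length (f z x))) * S f g l (g z x) z')"
proof -
  let ?h = "\<lambda>xs. 2 powr (- real (length (run_out f g z xs)))"
  let ?B = "\<lambda>x. {ys. length ys = l \<and> run_state g (g z x) ys = z'}"
  have eq: "{xs. length xs = Suc l \<and> run_state g z xs = z'} = (\<lambda>(x, ys). x # ys) ` (SIGMA x:UNIV. ?B x)"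
    by (auto simp: length_Suc_conv image_iff)
  have inj: "inj_on (\<lambda>(x, ys). x # ys) (SIGMA x:UNIV. ?B x)" by (auto simp: inj_on_def)
  have fin: "finite (?B x)" for x by (rule finite_subset[OF _ finite_len[of l]]) auto
  have "S f g (Suc l) z z' = (\<Sum>(x, ys)\<in>(SIGMA x:UNIV. ?B x). ?h (x # ys))"
    unfolding S_def eq by (subst sum.reindex[OF inj]) (simp add: case_prod_unfold)
  also have "\<dots> = (\<Sum>x\<in>UNIV. \<Sum>ys\<in>?B x. ?h (x # ys))"
    by (subst sum.Sigma[symmetric]) (auto simp: fin)
  also have "\<dots> = (\<Sum>x\<in>UNIV. 2 powr (- real (length (f z x))) * S f g l (g z x) z')"
    unfolding S_def sum_distrib_left
    by (intro sum.cong refl) (simp add: powr_add[symmetric] algebra_simps)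
  finally show ?thesis .
qed

lemma S_nonneg: "S f g l z z' \<ge> 0" unfolding S_def by (simp add: sum_nonneg)

lemma kraft_pow_entry:
  fixes f :: "nat \<Rightarrow> 'x::finite \<Rightarrow> bool list"
  assumes enc: "fs_encoder s f g"
  shows "z < s \<Longrightarrow> z' < s \<Longrightarrow> (kraft_mat s f g ^\<^sub>m l) $$ (z, z') = complex_of_real (S f g l z z')"
proof (induction l arbitrary: z)
  case 0
  have "{xs. length xs = 0 \<and> run_state g z xs = z'} = (if z = z' then {[]} else {})" by auto
  then show ?case using 0 by (simp add: S_def kraft_mat_def)
next
  case (Suc l)
  let ?K = "kraft_mat s f g"
  have K: "?K \<in> carrier_mat s s" by (simp add: kraft_mat_def)
  let ?a = "\<lambda>x. 2 powr (- real (length (f z x)))"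
  have gs: "g z x < s" for x using enc Suc.prems by (auto simp: fs_encoder_def)
  have "(?K ^\<^sub>m Suc l) $$ (z, z') = (\<Sum>w<s. ?K $$ (z, w) * (?K ^\<^sub>m l) $$ (w, z'))"
    unfolding pow_mat_Suc'[OF K] using K Suc.prems
    by (simp add: scalar_prod_def lessThan_atLeast0)
  also have "\<dots> = (\<Sum>w<s. complex_of_real ((\<Sum>x\<in>{x. g z x = w}. ?a x) * S f g l w z'))"
    using Suc.prems Suc.IH by (intro sum.cong refl) (simp add: kraft_mat_def)
  also have "\<dots> = complex_of_real (\<Sum>w<s. \<Sum>x\<in>{x. g z x = w}. ?a x * S f g l (g z x) z')"
    by (simp add: sum_distrib_right)
  also have "(\<Sum>w<s. \<Sum>x\<in>{x. g z x = w}. ?a x * S f g l (g z x) z') = (\<Sum>x\<in>UNIV. ?a x * S f g l (g z x) z')"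
    using sum.group[of "UNIV" "{..<s}" "g z" "\<lambda>x. ?a x * S f g l (g z x) z'"] gs by auto
  finally show ?case by (simp add: S_Suc)
qed

lemma S_bound:
  fixes f :: "nat \<Rightarrow> 'x::finite \<Rightarrow> bool list"
  assumes enc: "fs_encoder s f g" and il: "info_lossless s f g" and z: "z < s"
    and M: "\<And>z x. z < s \<Longrightarrow> length (f z x) \<le> M"
  shows "S f g l z z' \<le> real (l * M) + 1"
proof -
  let ?A = "{xs. length xs = l \<and> run_state g z xs = z'}"
  let ?ro = "run_out f g z"
  have inj: "inj_on ?ro ?A"
  proof (cases "l = 0")
    case True
    then show ?thesis by (auto simp: inj_on_def)
  next
    case False
    then have "inj_on (\<lambda>xs. (run_out f g z xs, run_state g z xs)) {xs. length xs = l}"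
      using il z unfolding info_lossless_def by auto
    then show ?thesis by (auto simp: inj_on_def)
  qed
  have sub: "?ro ` ?A \<subseteq> {w. length w \<le> l * M}"
    using run_out_len[OF enc z M] by auto
  have "S f g l z z' = (\<Sum>w\<in>?ro ` ?A. 2 powr (- real (length w)))"
    unfolding S_def by (subst sum.reindex[OF inj]) simp
  also have "\<dots> \<le> (\<Sum>w\<in>{w::bool list. length w \<le> l * M}. 2 powr (- real (length w)))"
    by (intro sum_mono2[OF finite_bool_lists_le sub]) auto
  also have "\<dots> = real (l * M) + 1" by (rule kraft_sum_le)
  finally show ?thesis .
qed

theorem theorem1:
  fixes s :: nat and f :: "nat \<Rightarrow> 'x::finite \<Rightarrow> bool list" and g :: "nat \<Rightarrow> 'x \<Rightarrow> nat"
  assumes "fs_encoder s f g" and "info_lossless s f g"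
  shows "spectral_radius (kraft_mat s f g) \<le> 1 \<and>
    (\<forall>l::nat. l \<ge> 1 \<longrightarrow>
       (\<forall>z<s. \<forall>z'<s. (kraft_mat s f g ^\<^sub>m l) $$ (z, z') =
          complex_of_real (\<Sum>xs\<in>{xs. length xs = l \<and> run_state g z xs = z'}.
              2 powr (- real (length (run_out f g z xs)))))
       \<and> spectral_radius (kraft_mat s f g ^\<^sub>m l) \<le> 1)"
proof -
  let ?K = "kraft_mat s f g"
  have K: "?K \<in> carrier_mat s s" by (simp add: kraft_mat_def)
  have s0: "s > 0" using assms(1) by (simp add: fs_encoder_def)
  define M where "M = Max {length (f z x) | z x. z < s}"
  have finM: "finite {length (f z x) | z x. z < s}"
  proof -
    have "{length (f z x) | z x. z < s} = (\<lambda>(z, x). length (f z x)) ` ({..<s} \<times> UNIV)" by auto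
    then show ?thesis by simp
  qed
  have M: "length (f z x) \<le> M" if "z < s" for z x
    unfolding M_def using that finM by (intro Max_ge) auto
  have entry: "(?K ^\<^sub>m l) $$ (z, z') = complex_of_real (S f g l z z')" if "z < s" "z' < s" for l z z'
    using kraft_pow_entry[OF assms(1) that] .
  have bnd: "cmod ((?K ^\<^sub>m l) $$ (z, z')) \<le> real (l * M) + 1" if "z < s" "z' < s" for l z z'
    using entry[OF that] S_bound[OF assms(1,2) that(1) M, of l z'] S_nonneg[of f g l z z'] by simp
  have sr1: "spectral_radius ?K \<le> 1"
  proof (rule sr_le_1[OF K s0, where C = "real M + 1"])
    fix k i j assume "i < s" "j < s"
    from bnd[OF this, of k] show "cmod ((?K ^\<^sub>m k) $$ (i, j)) \<le> (real M + 1) * (real k + 1)"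
      by (simp add: algebra_simps)
  qed
  have srl: "spectral_radius (?K ^\<^sub>m l) \<le> 1" for l
  proof (rule sr_le_1[OF pow_carrier_mat[OF K] s0, where C = "real (l * M) + 1"])
    fix k i j assume "i < s" "j < s"
    from bnd[OF this, of "l * k"] 
    have "cmod (((?K ^\<^sub>m l) ^\<^sub>m k) $$ (i, j)) \<le> real (l * k * M) + 1"
      by (simp add: pow_mat_pow[OF K])
    also have "\<dots> \<le> (real (l * M) + 1) * (real k + 1)" by (simp add: algebra_simps)
    finally show "cmod (((?K ^\<^sub>m l) ^\<^sub>m k) $$ (i, j)) \<le> (real (l * M) + 1) * (real k + 1)" .
  qed
  show ?thesis using sr1 srl entry unfolding S_def by blast
qed

end
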